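(* Let $\mathcal T=\boxtimes ABCD$ be a tetrahedron and $O\in\operatorname{int}\mathcal T$. (1) $(\mathcal T,O)$ has a stable equilibrium on the face $\triangle ABC$ if and only if the dihedral angles between $\triangle ABC$ and each of $\triangle ABO$, $\triangle AOC$, $\triangle OBC$ (i.e. the dihedral angles of the tetrahedron $\boxtimes ABCO$ along the edges $\overline{AB},\overline{AC},\overline{BC}$) are all acute. (2) $(\mathcal T,O')$ has a stable equilibrium on $\triangle ABC$ for every $O'\in\operatorname{int}\mathcal T$ if and only if none of the dihedral angles between $\triangle ABC$ and each of $\triangle ABD$, $\triangle ADC$, $\triangle DBC$ is obtuse. (3) Let $\mathcal S_A$ be a small sphere centred at $A$ and let $P,Q,\Omega$ be the intersections of $\mathcal S_A$ with the segments $\overline{AB},\overline{AC},\overline{AO}$ respectively; define analogously points on a small sphere $\mathcal S_B$ centred at $B$ (intersections with $\overline{BA},\overline{BC},\overline{BO}$). If the dihedral angle between $\triangle ABC$ and $\triangle ABO$ is obtuse, then the spherical angle $\angle QP\Omega$ on $\mathcal S_A$ is obtuse, and so is the corresponding spherical angle on $\mathcal S_B$ (at the point on $\overline{BA}$, between the arcs towards the points on $\overline{BC}$ and $\overline{BO}$).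
   Context: For a convex polyhedron $\mathcal P$ and $O\in\operatorname{int}\mathcal P$, $(\mathcal P,O)$ is in (stable) equilibrium on a face $F$ if there exists $Q$ in the relative interior of $F$ such that the plane perpendicular to $[O,Q]$ at $Q$ supports $\mathcal P$. *)

theory Defs
  imports "HOL-Analysis.Analysis"
begin

type_synonym point = "real ^ 3"

definition vangle :: "point \<Rightarrow> point \<Rightarrow> real" where
  "vangle u v = arccos ((u \<bullet> v) / (norm u * norm v))"

definition orth_part :: "point \<Rightarrow> point \<Rightarrow> point" where
  "orth_part d w = w - ((w \<bullet> d) / (d \<bullet> d)) *\<^sub>R d"

text \<open>Dihedral angle along the edge (E1,E2) between the half-planes (triangles)
  E1 E2 X and E1 E2 Y: the angle between the components of X - E1 and Y - E1
  orthogonal to the edge direction E2 - E1.\<close>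
definition dihedral_angle :: "point \<Rightarrow> point \<Rightarrow> point \<Rightarrow> point \<Rightarrow> real" where
  "dihedral_angle E1 E2 X Y =
     vangle (orth_part (E2 - E1) (X - E1)) (orth_part (E2 - E1) (Y - E1))"

text \<open>Spherical angle at the point X of a sphere centred at Ctr, between the
  great-circle arcs from X towards Y and towards Z: the angle between the tangent
  vectors of these arcs at X.\<close>
definition spherical_angle :: "point \<Rightarrow> point \<Rightarrow> point \<Rightarrow> point \<Rightarrow> real" where
  "spherical_angle Ctr X Y Z =
     vangle (orth_part (X - Ctr) (Y - Ctr)) (orth_part (X - Ctr) (Z - Ctr))"

definition supports :: "point set \<Rightarrow> point set \<Rightarrow> bool" where
  "supports H P \<longleftrightarrow>
     (\<exists>a b. a \<noteq> 0 \<and> H = {x. a \<bullet> x = b} \<and> (\<forall>x\<in>P. a \<bullet> x \<le> b)) \<and> H \<inter> P \<noteq> {}"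

definition perp_plane :: "point \<Rightarrow> point \<Rightarrow> point set" where
  "perp_plane Z Q = {x. (x - Q) \<bullet> (Q - Z) = 0}"

definition equilibrium_on :: "point set \<Rightarrow> point \<Rightarrow> point set \<Rightarrow> bool" where
  "equilibrium_on P Z F \<longleftrightarrow>
     (\<exists>Q \<in> rel_interior F. supports (perp_plane Z Q) P)"

end

theory Submission
  imports Defs
begin


lemma vangle_aux:
  fixes u v :: point
  shows "-1 \<le> (u \<bullet> v) / (norm u * norm v) \<and> (u \<bullet> v) / (norm u * norm v) \<le> 1 \<and>
     (0 < (u \<bullet> v) / (norm u * norm v) \<longleftrightarrow> 0 < u \<bullet> v) \<and>
     (0 \<le> (u \<bullet> v) / (norm u * norm v) \<longleftrightarrow> 0 \<le> u \<bullet> v)"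
proof (cases "norm u * norm v = 0")
  case True
  then have "u = 0 \<or> v = 0" by auto
  then show ?thesis by auto
next
  case False
  have cs: "\<bar>u \<bullet> v\<bar> \<le> norm u * norm v" by (rule Cauchy_Schwarz_ineq2)
  have nn: "0 \<le> norm u * norm v" by simp
  then have p: "0 < norm u * norm v" using False by linarith
  then show ?thesis using cs
    by (auto simp: divide_simps zero_less_divide_iff zero_le_divide_iff abs_le_iff)
qed

lemma vangle_lt: "vangle u v < pi/2 \<longleftrightarrow> 0 < u \<bullet> v"
proof -
  let ?c = "(u \<bullet> v) / (norm u * norm v)"
  note a = vangle_aux[of u v]
  have "arccos ?c < arccos 0 \<longleftrightarrow> 0 < ?c"
    using a arccos_less_arccos[of 0 ?c] arccos_le_arccos[of ?c 0] by (cases "0 < ?c") auto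
  then show ?thesis using a unfolding vangle_def by simp
qed

lemma vangle_le: "vangle u v \<le> pi/2 \<longleftrightarrow> 0 \<le> u \<bullet> v"
proof -
  let ?c = "(u \<bullet> v) / (norm u * norm v)"
  note a = vangle_aux[of u v]
  have "arccos ?c \<le> arccos 0 \<longleftrightarrow> 0 \<le> ?c"
    using a arccos_less_arccos[of ?c 0] arccos_le_arccos[of 0 ?c] by (cases "0 \<le> ?c") auto
  then show ?thesis using a unfolding vangle_def by (simp add: not_less[symmetric])
qed

lemma vangle_gt: "pi/2 < vangle u v \<longleftrightarrow> u \<bullet> v < 0"
  using vangle_le[of u v] by linarith

lemma orth_add: "orth_part d (x + y) = orth_part d x + orth_part d y"
  by (simp add: orth_part_def inner_add_left add_divide_distrib scaleR_add_left algebra_simps)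
lemma orth_diff: "orth_part d (x - y) = orth_part d x - orth_part d y"
  by (simp add: orth_part_def inner_diff_left diff_divide_distrib scaleR_diff_left algebra_simps)
lemma orth_scale: "orth_part d (c *\<^sub>R x) = c *\<^sub>R orth_part d x"
  by (simp add: orth_part_def algebra_simps)
lemma orth_self: "orth_part d d = 0"
  by (cases "d = 0") (auto simp: orth_part_def)
lemma orth_perp: "x \<bullet> d = 0 \<Longrightarrow> orth_part d x = x"
  by (simp add: orth_part_def)
lemma orth_inner: "orth_part d x \<bullet> d = 0"
  by (cases "d = 0") (auto simp: orth_part_def inner_diff_left)
lemma orth_dscale: "c \<noteq> 0 \<Longrightarrow> orth_part (c *\<^sub>R d) x = orth_part d x"
  by (simp add: orth_part_def power2_eq_square)
lemma orth_neg: "orth_part (- d) x = orth_part d x"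
  using orth_dscale[of "-1" d x] by simp



lemma orth_nonzero:
  fixes S :: "point set"
  assumes "\<not> affine_dependent S" "X \<in> S" "Y \<in> S" "W \<in> S" "X \<noteq> Y" "W \<noteq> X" "W \<noteq> Y"
  shows "orth_part (Y - X) (W - X) \<noteq> 0"
proof
  assume h: "orth_part (Y - X) (W - X) = 0"
  define k where "k = ((W - X) \<bullet> (Y - X)) / ((Y - X) \<bullet> (Y - X))"
  have "W - X = k *\<^sub>R (Y - X)" using h unfolding orth_part_def k_def by simp
  then have "W = (1 - k) *\<^sub>R X + k *\<^sub>R Y" by (simp add: algebra_simps)
  then have "W \<in> affine hull {X, Y}" unfolding affine_hull_2 by force
  moreover have "affine hull {X, Y} \<subseteq> affine hull (S - {W})"
    using assms by (intro hull_mono) auto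
  ultimately show False using assms(1,4) unfolding affine_dependent_def by blast
qed

lemma orth_perp0: "x \<bullet> y = 0 \<Longrightarrow> d \<bullet> y = 0 \<Longrightarrow> orth_part d x \<bullet> y = 0"
  by (simp add: orth_part_def inner_diff_left)

lemma foot_sign:
  fixes A B C Z H :: point
  assumes "(Z - H) \<bullet> (B - A) = 0" "(Z - H) \<bullet> (C - A) = 0"
    "H = A + b *\<^sub>R (B - A) + g *\<^sub>R (C - A)"
  shows "orth_part (B - A) (C - A) \<bullet> orth_part (B - A) (Z - A)
         = g * (orth_part (B - A) (C - A) \<bullet> orth_part (B - A) (C - A))"
proof -
  have z: "Z - A = b *\<^sub>R (B - A) + g *\<^sub>R (C - A) + (Z - H)" using assms(3) by simp
  have e: "orth_part (B - A) (Z - A) = g *\<^sub>R orth_part (B - A) (C - A) + (Z - H)"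
    unfolding z orth_add orth_scale orth_self using assms(1) by (simp add: orth_perp)
  have "orth_part (B - A) (C - A) \<bullet> (Z - H) = 0"
  proof -
    have h1: "(B - A) \<bullet> (Z - H) = 0" "(C - A) \<bullet> (Z - H) = 0"
      using assms(1,2) by (metis inner_commute)+
    show ?thesis using orth_perp0[OF h1(2) h1(1)] .
  qed
  then show ?thesis unfolding e by (simp add: inner_add_right)
qed

lemma dist4:
  assumes "card {A, B, C, D} = 4"
  shows "A \<noteq> B" "A \<noteq> C" "A \<noteq> D" "B \<noteq> C" "B \<noteq> D" "C \<noteq> D"
  using assms by (auto simp: card_insert_if split: if_splits)



lemma coords:
  fixes A B C Z H :: point
  assumes "(Z - H) \<bullet> (B - A) = 0" "(Z - H) \<bullet> (C - A) = 0"
    "H = a *\<^sub>R A + b *\<^sub>R B + g *\<^sub>R C" "a + b + g = 1"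
  shows "orth_part (B - A) (C - A) \<bullet> orth_part (B - A) (Z - A)
         = g * (orth_part (B - A) (C - A) \<bullet> orth_part (B - A) (C - A))"
    "orth_part (C - A) (B - A) \<bullet> orth_part (C - A) (Z - A)
         = b * (orth_part (C - A) (B - A) \<bullet> orth_part (C - A) (B - A))"
    "orth_part (C - B) (A - B) \<bullet> orth_part (C - B) (Z - B)
         = a * (orth_part (C - B) (A - B) \<bullet> orth_part (C - B) (A - B))"
proof -
  have a: "a = 1 - b - g" using assms(4) by simp
  have h1: "H = A + b *\<^sub>R (B - A) + g *\<^sub>R (C - A)"
    using assms(3) unfolding a by (simp add: algebra_simps)
  have h2: "H = A + g *\<^sub>R (C - A) + b *\<^sub>R (B - A)"
    using h1 by (simp add: algebra_simps)
  have h3: "H = B + g *\<^sub>R (C - B) + a *\<^sub>R (A - B)"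
    using assms(3) unfolding a by (simp add: algebra_simps)
  have p3: "(Z - H) \<bullet> (C - B) = 0"
  proof -
    have "C - B = (C - A) - (B - A)" by simp
    then have "(Z - H) \<bullet> (C - B) = (Z - H) \<bullet> (C - A) - (Z - H) \<bullet> (B - A)"
      by (metis inner_diff_right)
    then show ?thesis using assms(1,2) by simp
  qed
  have p4: "(Z - H) \<bullet> (A - B) = 0"
  proof -
    have "A - B = - (B - A)" by simp
    then show ?thesis using assms(1) by (metis inner_minus_right neg_equal_0_iff_equal)
  qed
  show "orth_part (B - A) (C - A) \<bullet> orth_part (B - A) (Z - A)
         = g * (orth_part (B - A) (C - A) \<bullet> orth_part (B - A) (C - A))"
    by (rule foot_sign[OF assms(1,2) h1])
  show "orth_part (C - A) (B - A) \<bullet> orth_part (C - A) (Z - A)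
         = b * (orth_part (C - A) (B - A) \<bullet> orth_part (C - A) (B - A))"
    by (rule foot_sign[OF assms(2,1) h2])
  show "orth_part (C - B) (A - B) \<bullet> orth_part (C - B) (Z - B)
         = a * (orth_part (C - B) (A - B) \<bullet> orth_part (C - B) (A - B))"
    by (rule foot_sign[OF p3 p4 h3])
qed

lemma foot_exists:
  fixes A B C Z :: point
  assumes "orth_part (B - A) (C - A) \<noteq> 0"
  obtains b g where "(Z - (A + b *\<^sub>R (B - A) + g *\<^sub>R (C - A))) \<bullet> (B - A) = 0"
    "(Z - (A + b *\<^sub>R (B - A) + g *\<^sub>R (C - A))) \<bullet> (C - A) = 0"
proof -
  define u where "u = B - A"
  define v where "v = C - A"
  define w where "w = Z - A"
  define p where "p = orth_part u v"
  define g where "g = (w \<bullet> p) / (p \<bullet> p)"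
  define b where "b = ((w - g *\<^sub>R v) \<bullet> u) / (u \<bullet> u)"
  have pp: "p \<bullet> p \<noteq> 0" using assms unfolding p_def u_def v_def by simp
  have e: "Z - (A + b *\<^sub>R (B - A) + g *\<^sub>R (C - A)) = orth_part u (w - g *\<^sub>R v)"
    unfolding orth_part_def b_def u_def v_def w_def by (simp add: algebra_simps)
  have 1: "orth_part u (w - g *\<^sub>R v) \<bullet> u = 0" by (rule orth_inner)
  have up: "u \<bullet> p = 0" using orth_inner[of u v] unfolding p_def by (simp add: inner_commute)
  have vp: "v = p + ((v \<bullet> u) / (u \<bullet> u)) *\<^sub>R u" unfolding p_def orth_part_def by simp
  have wp: "orth_part u w \<bullet> p = w \<bullet> p"
    unfolding orth_part_def using up by (simp add: inner_diff_left)
  have "orth_part u (w - g *\<^sub>R v) \<bullet> v = (orth_part u w - g *\<^sub>R p) \<bullet> v"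
    unfolding orth_diff orth_scale p_def ..
  also have "\<dots> = (orth_part u w - g *\<^sub>R p) \<bullet> p
      + ((v \<bullet> u) / (u \<bullet> u)) * ((orth_part u w - g *\<^sub>R p) \<bullet> u)"
    by (subst vp) (simp only: inner_add_right inner_scaleR_right)
  also have "(orth_part u w - g *\<^sub>R p) \<bullet> u = 0"
    using orth_inner[of u w] up by (simp add: inner_diff_left inner_commute[of p u])
  also have "(orth_part u w - g *\<^sub>R p) \<bullet> p = w \<bullet> p - g * (p \<bullet> p)"
    using wp by (simp add: inner_diff_left)
  also have "w \<bullet> p - g * (p \<bullet> p) = 0" using pp unfolding g_def by simp
  finally have 2: "orth_part u (w - g *\<^sub>R v) \<bullet> v = 0" by simp
  show ?thesis
    apply (rule that[of b g])
    using 1 2 unfolding e u_def v_def by auto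
qed



lemma L_a: "(z - q) \<bullet> (b - a) = (a - q) \<bullet> (q - z) - (b - q) \<bullet> (q - z)" for z q a b :: point
  by (simp add: inner_diff_left inner_diff_right inner_commute algebra_simps)
lemma L_b: "(z - h) \<bullet> (h - a) = (h - z) \<bullet> a - (h - z) \<bullet> h" for z h a :: point
  by (simp add: inner_diff_left inner_diff_right inner_commute algebra_simps)
lemma L_c: "(h - z) \<bullet> z = (h - z) \<bullet> h - (h - z) \<bullet> (h - z)" for z h :: point
  by (simp add: inner_diff_left inner_diff_right inner_commute algebra_simps)
lemma scaleD: "l *\<^sub>R (D::point) = x *\<^sub>R A + y *\<^sub>R B + w *\<^sub>R C \<Longrightarrow> 0 < l \<Longrightarrow>
   D = (x / l) *\<^sub>R A + (y / l) *\<^sub>R B + (w / l) *\<^sub>R C"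
proof -
  assume h: "l *\<^sub>R (D::point) = x *\<^sub>R A + y *\<^sub>R B + w *\<^sub>R C" "0 < l"
  have "D = (1/l) *\<^sub>R (l *\<^sub>R D)" using h(2) by simp
  also have "\<dots> = (x / l) *\<^sub>R A + (y / l) *\<^sub>R B + (w / l) *\<^sub>R C" unfolding h(1)
    by (simp add: scaleR_add_right)
  finally show ?thesis .
qed

lemma part1:
  fixes A B C D Z :: point
  assumes tet: "\<not> affine_dependent {A, B, C, D}" "card {A, B, C, D} = 4"
    and Z: "Z \<in> interior (convex hull {A, B, C, D})"
  shows "equilibrium_on (convex hull {A, B, C, D}) Z (convex hull {A, B, C}) \<longleftrightarrow>
     0 < orth_part (B - A) (C - A) \<bullet> orth_part (B - A) (Z - A) \<and>
     0 < orth_part (C - A) (B - A) \<bullet> orth_part (C - A) (Z - A) \<and>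
     0 < orth_part (C - B) (A - B) \<bullet> orth_part (C - B) (Z - B)"
proof -
  note d = dist4[OF tet(2)]
  have ind3: "\<not> affine_dependent {A, B, C}"
    using tet(1) affine_dependent_subset[of "{A,B,C}" "{A,B,C,D}"] by blast
  have RI: "rel_interior (convex hull {A, B, C}) =
     {y. \<exists>u. (\<forall>x\<in>{A,B,C}. 0 < u x) \<and> sum u {A,B,C} = 1 \<and> (\<Sum>x\<in>{A,B,C}. u x *\<^sub>R x) = y}"
    by (rule rel_interior_convex_hull_explicit[OF ind3])
  have "interior (convex hull {A, B, C, D}) =
     {y. \<exists>u. (\<forall>x\<in>{A,B,C,D}. 0 < u x \<and> u x < 1) \<and> sum u {A,B,C,D} = 1 \<and> (\<Sum>x\<in>{A,B,C,D}. u x *\<^sub>R x) = y}"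
    using interior_convex_hull_explicit[OF tet(1)] tet(2) by simp
  then obtain l where l: "\<forall>x\<in>{A,B,C,D}. 0 < l x \<and> l x < 1" "sum l {A,B,C,D} = 1"
    "(\<Sum>x\<in>{A,B,C,D}. l x *\<^sub>R x) = Z" using Z by auto
  have l1: "l A + l B + l C + l D = 1" using l(2) d by simp
  have l2: "l A *\<^sub>R A + l B *\<^sub>R B + l C *\<^sub>R C + l D *\<^sub>R D = Z" using l(3) d by (simp add: algebra_simps)
  have lD: "0 < l D" using l(1) by simp
  define p1 where "p1 = orth_part (B - A) (C - A)"
  define p2 where "p2 = orth_part (C - A) (B - A)"
  define p3 where "p3 = orth_part (C - B) (A - B)"
  have n1: "0 < p1 \<bullet> p1" unfolding p1_def
    using orth_nonzero[OF tet(1), of A B C] d by simp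
  have n2: "0 < p2 \<bullet> p2" unfolding p2_def
    using orth_nonzero[OF tet(1), of A C B] d by simp
  have n3: "0 < p3 \<bullet> p3" unfolding p3_def
    using orth_nonzero[OF tet(1), of B C A] d by simp
  let ?T = "convex hull {A, B, C, D}"
  have ABCD: "A \<in> ?T" "B \<in> ?T" "C \<in> ?T" "D \<in> ?T" by (simp_all add: hull_inc)
  show ?thesis
  proof
    assume "equilibrium_on ?T Z (convex hull {A, B, C})"
    then obtain Q a0 b0 where Q: "Q \<in> rel_interior (convex hull {A, B, C})"
      and a0: "perp_plane Z Q = {x. a0 \<bullet> x = b0}" "\<forall>x\<in>?T. a0 \<bullet> x \<le> b0"
      unfolding equilibrium_on_def supports_def by blast
    from Q obtain u where u: "\<forall>x\<in>{A,B,C}. 0 < u x" "sum u {A,B,C} = 1"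
      "(\<Sum>x\<in>{A,B,C}. u x *\<^sub>R x) = Q" unfolding RI by auto
    have u1: "u A + u B + u C = 1" using u(2) d by simp
    have u2: "Q = u A *\<^sub>R A + u B *\<^sub>R B + u C *\<^sub>R C" using u(3) d by (simp add: algebra_simps)
    have up: "0 < u A" "0 < u B" "0 < u C" using u(1) by auto
    have "Q \<in> perp_plane Z Q" unfolding perp_plane_def by simp
    then have aQ: "a0 \<bullet> Q = b0" using a0(1) by auto
    have le: "a0 \<bullet> A \<le> b0" "a0 \<bullet> B \<le> b0" "a0 \<bullet> C \<le> b0" using a0(2) ABCD by auto
    have eqQ: "a0 \<bullet> Q = u A * (a0 \<bullet> A) + u B * (a0 \<bullet> B) + u C * (a0 \<bullet> C)"
      unfolding u2 by (simp add: inner_add_right)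
    have ex: "u A * (b0 - a0 \<bullet> A) + u B * (b0 - a0 \<bullet> B) + u C * (b0 - a0 \<bullet> C)
       = (u A + u B + u C) * b0 - (u A * (a0 \<bullet> A) + u B * (a0 \<bullet> B) + u C * (a0 \<bullet> C))"
      by (simp add: algebra_simps)
    have s0: "u A * (b0 - a0 \<bullet> A) + u B * (b0 - a0 \<bullet> B) + u C * (b0 - a0 \<bullet> C) = 0"
      using aQ u1 eqQ ex by simp
    have t: "0 \<le> u A * (b0 - a0 \<bullet> A)" "0 \<le> u B * (b0 - a0 \<bullet> B)" "0 \<le> u C * (b0 - a0 \<bullet> C)"
      using up le by simp_all
    have "u A * (b0 - a0 \<bullet> A) = 0" "u B * (b0 - a0 \<bullet> B) = 0" "u C * (b0 - a0 \<bullet> C) = 0"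
      using s0 t by linarith+
    then have "a0 \<bullet> A = b0" "a0 \<bullet> B = b0" "a0 \<bullet> C = b0" using up by auto
    then have "A \<in> perp_plane Z Q" "B \<in> perp_plane Z Q" "C \<in> perp_plane Z Q" using a0(1) by auto
    then have pA: "(A - Q) \<bullet> (Q - Z) = 0" and pB: "(B - Q) \<bullet> (Q - Z) = 0" and pC: "(C - Q) \<bullet> (Q - Z) = 0"
      unfolding perp_plane_def by auto
    have e1: "(Z - Q) \<bullet> (B - A) = (A - Q) \<bullet> (Q - Z) - (B - Q) \<bullet> (Q - Z)"
      by (rule L_a)
    have e2: "(Z - Q) \<bullet> (C - A) = (A - Q) \<bullet> (Q - Z) - (C - Q) \<bullet> (Q - Z)"
      by (rule L_a)
    have o1: "(Z - Q) \<bullet> (B - A) = 0" "(Z - Q) \<bullet> (C - A) = 0"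
      using e1 e2 pA pB pC by simp_all
    note c = coords[OF o1 u2 u1]
    show "0 < orth_part (B - A) (C - A) \<bullet> orth_part (B - A) (Z - A) \<and>
     0 < orth_part (C - A) (B - A) \<bullet> orth_part (C - A) (Z - A) \<and>
     0 < orth_part (C - B) (A - B) \<bullet> orth_part (C - B) (Z - B)"
      unfolding c using up n1 n2 n3 unfolding p1_def p2_def p3_def by simp
  next
    assume G: "0 < orth_part (B - A) (C - A) \<bullet> orth_part (B - A) (Z - A) \<and>
     0 < orth_part (C - A) (B - A) \<bullet> orth_part (C - A) (Z - A) \<and>
     0 < orth_part (C - B) (A - B) \<bullet> orth_part (C - B) (Z - B)"
    have "p1 \<noteq> 0" using n1 by auto
    then obtain b g where o: "(Z - (A + b *\<^sub>R (B - A) + g *\<^sub>R (C - A))) \<bullet> (B - A) = 0"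
      "(Z - (A + b *\<^sub>R (B - A) + g *\<^sub>R (C - A))) \<bullet> (C - A) = 0"
      using foot_exists unfolding p1_def by blast
    define H where "H = A + b *\<^sub>R (B - A) + g *\<^sub>R (C - A)"
    define a where "a = 1 - b - g"
    have Hc: "H = a *\<^sub>R A + b *\<^sub>R B + g *\<^sub>R C" unfolding H_def a_def by (simp add: algebra_simps)
    have s1: "a + b + g = 1" unfolding a_def by simp
    note c = coords[OF o[folded H_def] Hc s1]
    have pos: "0 < a" "0 < b" "0 < g"
      using G n1 n2 n3 unfolding c p1_def p2_def p3_def by (simp_all add: zero_less_mult_iff)
    have HRI: "H \<in> rel_interior (convex hull {A, B, C})"
      unfolding RI
      apply (rule CollectI, rule exI[of _ "\<lambda>x. if x = A then a else if x = B then b else g"])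
      using pos d s1 Hc by (simp add: algebra_simps)
    define n where "n = H - Z"
    have oH: "(Z - H) \<bullet> (B - A) = 0" "(Z - H) \<bullet> (C - A) = 0" using o H_def by simp_all
    have nA: "n \<bullet> A = n \<bullet> H"
    proof -
      have "H - A = b *\<^sub>R (B - A) + g *\<^sub>R (C - A)" unfolding H_def by simp
      then have "(Z - H) \<bullet> (H - A) = 0" using oH by (simp add: inner_add_right)
      then show ?thesis unfolding n_def using L_b[of Z H] by simp
    qed
    have nB: "n \<bullet> B = n \<bullet> H"
    proof -
      have "H - B = (b - 1) *\<^sub>R (B - A) + g *\<^sub>R (C - A)" unfolding H_def by (simp add: algebra_simps)
      then have "(Z - H) \<bullet> (H - B) = 0" using oH by (simp add: inner_add_right)
      then show ?thesis unfolding n_def using L_b[of Z H] by simp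
    qed
    have nC: "n \<bullet> C = n \<bullet> H"
    proof -
      have "H - C = b *\<^sub>R (B - A) + (g - 1) *\<^sub>R (C - A)" unfolding H_def by (simp add: algebra_simps)
      then have "(Z - H) \<bullet> (H - C) = 0" using oH by (simp add: inner_add_right)
      then show ?thesis unfolding n_def using L_b[of Z H] by simp
    qed
    have nZ: "n \<bullet> Z = n \<bullet> H - n \<bullet> n" unfolding n_def using L_c[of H Z] by simp
    have eqZ: "n \<bullet> Z = l A * (n \<bullet> A) + l B * (n \<bullet> B) + l C * (n \<bullet> C) + l D * (n \<bullet> D)"
      unfolding l2[symmetric] by (simp add: inner_add_right)
    have ex2: "l A * (n \<bullet> A) + l B * (n \<bullet> B) + l C * (n \<bullet> C) + l D * (n \<bullet> D)
      = (l A + l B + l C + l D) * (n \<bullet> H) + l D * (n \<bullet> D - n \<bullet> H)"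
      unfolding nA nB nC by (simp add: algebra_simps)
    have "l D * (n \<bullet> D - n \<bullet> H) = - (n \<bullet> n)"
      using eqZ ex2 nZ l1 by simp
    moreover have "0 \<le> n \<bullet> n" by simp
    ultimately have nD: "n \<bullet> D \<le> n \<bullet> H" using lD
    proof -
      assume h: "l D * (n \<bullet> D - n \<bullet> H) = - (n \<bullet> n)" "0 \<le> n \<bullet> n" "0 < l D"
      then have "l D * (n \<bullet> D - n \<bullet> H) \<le> 0" by simp
      then have "n \<bullet> D - n \<bullet> H \<le> 0" using h(3) by (simp add: mult_le_0_iff)
      then show ?thesis by simp
    qed
    have nz: "n \<noteq> 0"
    proof
      assume "n = 0"
      then have "Z = H" unfolding n_def by simp
      then have "l A *\<^sub>R A + l B *\<^sub>R B + l C *\<^sub>R C + l D *\<^sub>R D = a *\<^sub>R A + b *\<^sub>R B + g *\<^sub>R C"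
        using l2 Hc by simp
      then have "l D *\<^sub>R D = (a - l A) *\<^sub>R A + (b - l B) *\<^sub>R B + (g - l C) *\<^sub>R C"
        by (simp add: algebra_simps)
      then have "D = ((a - l A) / l D) *\<^sub>R A + ((b - l B) / l D) *\<^sub>R B + ((g - l C) / l D) *\<^sub>R C"
        using lD by (rule scaleD)
      moreover have "(a - l A) / l D + (b - l B) / l D + (g - l C) / l D = 1"
      proof -
        have "(a - l A) / l D + (b - l B) / l D + (g - l C) / l D = ((a - l A) + (b - l B) + (g - l C)) / l D"
          by (simp add: add_divide_distrib)
        also have "(a - l A) + (b - l B) + (g - l C) = l D" using s1 l1 by linarith
        finally show ?thesis using lD by simp
      qed
      ultimately have "D \<in> affine hull {A, B, C}" unfolding affine_hull_3 by blast
      moreover have "{A, B, C, D} - {D} = {A, B, C}" using d by auto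
      ultimately show False using tet(1) unfolding affine_dependent_def by force
    qed
    have sub: "?T \<subseteq> {x. n \<bullet> x \<le> n \<bullet> H}"
      by (rule hull_minimal) (use nA nB nC nD convex_halfspace_le in auto)
    have HT: "H \<in> ?T"
      using HRI rel_interior_subset hull_mono[of "{A,B,C}" "{A,B,C,D}"] by blast
    have pl: "perp_plane Z H = {x. n \<bullet> x = n \<bullet> H}"
      unfolding perp_plane_def n_def by (auto simp: inner_diff_left inner_commute)
    show "equilibrium_on ?T Z (convex hull {A, B, C})"
      unfolding equilibrium_on_def supports_def
      apply (rule bexI[OF _ HRI])
      using nz pl sub HT by (auto simp: perp_plane_def)
  qed
qed



lemma seg_pos:
  fixes A B P :: point
  assumes "P \<in> closed_segment A B" "dist A P = r" "0 < r"
  obtains s where "0 < s" "P - A = s *\<^sub>R (B - A)"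
proof -
  obtain u where u: "0 \<le> u" "u \<le> 1" "P = (1 - u) *\<^sub>R A + u *\<^sub>R B"
    using assms(1) unfolding closed_segment_def by auto
  have "P - A = u *\<^sub>R (B - A)" using u(3) by (simp add: algebra_simps)
  moreover have "u \<noteq> 0" using u(3) assms(2,3) by auto
  ultimately show ?thesis using that[of u] u(1) by auto
qed

lemma orth_BA: "orth_part (A - B) (C - B) = orth_part (B - A) (C - A)" for A B C :: point
proof -
  have "orth_part (A - B) (C - B) = orth_part (B - A) (C - B)"
    using orth_neg[of "B - A" "C - B"] by simp
  also have "C - B = (C - A) - (B - A)" by simp
  then have "orth_part (B - A) (C - B) = orth_part (B - A) (C - A)"
    by (simp only: orth_diff orth_self) simp
  finally show ?thesis .
qed

lemma part3:
  fixes A B C Z :: point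
  assumes "dihedral_angle A B C Z > pi / 2"
  shows "(\<forall>r P Q \<Omega>. 0 < r \<and> r < dist A B \<and> r < dist A C \<and> r < dist A Z \<and>
            P \<in> closed_segment A B \<and> dist A P = r \<and>
            Q \<in> closed_segment A C \<and> dist A Q = r \<and>
            \<Omega> \<in> closed_segment A Z \<and> dist A \<Omega> = r \<longrightarrow>
            spherical_angle A P Q \<Omega> > pi / 2)
      \<and> (\<forall>r P Q \<Omega>. 0 < r \<and> r < dist B A \<and> r < dist B C \<and> r < dist B Z \<and>
            P \<in> closed_segment B A \<and> dist B P = r \<and>
            Q \<in> closed_segment B C \<and> dist B Q = r \<and>
            \<Omega> \<in> closed_segment B Z \<and> dist B \<Omega> = r \<longrightarrow>
            spherical_angle B P Q \<Omega> > pi / 2)"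
proof -
  have G: "orth_part (B - A) (C - A) \<bullet> orth_part (B - A) (Z - A) < 0"
    using assms unfolding dihedral_angle_def vangle_gt .
  show ?thesis
  proof (intro conjI allI impI)
    fix r P Q \<Omega>
    assume h: "0 < r \<and> r < dist A B \<and> r < dist A C \<and> r < dist A Z \<and>
            P \<in> closed_segment A B \<and> dist A P = r \<and>
            Q \<in> closed_segment A C \<and> dist A Q = r \<and>
            \<Omega> \<in> closed_segment A Z \<and> dist A \<Omega> = r"
    obtain s where s: "0 < s" "P - A = s *\<^sub>R (B - A)" using seg_pos h by metis
    obtain t where t: "0 < t" "Q - A = t *\<^sub>R (C - A)" using seg_pos h by metis
    obtain t' where t': "0 < t'" "\<Omega> - A = t' *\<^sub>R (Z - A)" using seg_pos h by metis
    have "orth_part (P - A) (Q - A) \<bullet> orth_part (P - A) (\<Omega> - A)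
      = (t * t') * (orth_part (B - A) (C - A) \<bullet> orth_part (B - A) (Z - A))"
      unfolding s t t' using s(1) by (simp add: orth_dscale orth_scale)
    also have "\<dots> < 0" using G t(1) t'(1) by (simp add: mult_pos_neg)
    finally show "spherical_angle A P Q \<Omega> > pi / 2"
      unfolding spherical_angle_def vangle_gt .
  next
    fix r P Q \<Omega>
    assume h: "0 < r \<and> r < dist B A \<and> r < dist B C \<and> r < dist B Z \<and>
            P \<in> closed_segment B A \<and> dist B P = r \<and>
            Q \<in> closed_segment B C \<and> dist B Q = r \<and>
            \<Omega> \<in> closed_segment B Z \<and> dist B \<Omega> = r"
    obtain s where s: "0 < s" "P - B = s *\<^sub>R (A - B)" using seg_pos h by metis
    obtain t where t: "0 < t" "Q - B = t *\<^sub>R (C - B)" using seg_pos h by metis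
    obtain t' where t': "0 < t'" "\<Omega> - B = t' *\<^sub>R (Z - B)" using seg_pos h by metis
    have "orth_part (P - B) (Q - B) \<bullet> orth_part (P - B) (\<Omega> - B)
      = (t * t') * (orth_part (A - B) (C - B) \<bullet> orth_part (A - B) (Z - B))"
      unfolding s t t' using s(1) by (simp add: orth_dscale orth_scale)
    also have "\<dots> = (t * t') * (orth_part (B - A) (C - A) \<bullet> orth_part (B - A) (Z - A))"
      unfolding orth_BA ..
    also have "\<dots> < 0" using G t(1) t'(1) by (simp add: mult_pos_neg)
    finally show "spherical_angle B P Q \<Omega> > pi / 2"
      unfolding spherical_angle_def vangle_gt .
  qed
qed

lemma affine4:
  fixes A B C D V X d p :: point
  assumes "lA + lB + lC + lD = 1" "V = lA *\<^sub>R A + lB *\<^sub>R B + lC *\<^sub>R C + lD *\<^sub>R D"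
  shows "p \<bullet> orth_part d (V - X) = lA * (p \<bullet> orth_part d (A - X)) + lB * (p \<bullet> orth_part d (B - X))
     + lC * (p \<bullet> orth_part d (C - X)) + lD * (p \<bullet> orth_part d (D - X))"
proof -
  have "V - X = lA *\<^sub>R (A - X) + lB *\<^sub>R (B - X) + lC *\<^sub>R (C - X) + lD *\<^sub>R (D - X)"
  proof -
    have "X = (lA + lB + lC + lD) *\<^sub>R X" using assms(1) by simp
    then show ?thesis unfolding assms(2) by (simp add: algebra_simps)
  qed
  then show ?thesis by (simp add: orth_add orth_scale inner_add_right)
qed



lemma eps_lemma:
  fixes P g :: real
  assumes "0 < P" "g < 0"
  shows "\<exists>e. 0 < e \<and> e < 1/3 \<and> e * P + (1 - 3 * e) * g < 0"
proof -
  define e where "e = - g / (2 * (P - 3 * g))"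
  have q: "0 < P - 3 * g" using assms by simp
  have "0 < e" unfolding e_def using assms q by (intro divide_pos_pos) auto
  moreover have "e < 1/3" unfolding e_def using assms q by (simp add: field_simps)
  moreover have "e * P + (1 - 3 * e) * g = e * (P - 3 * g) + g" by (simp add: algebra_simps)
  moreover have "e * (P - 3 * g) = - g / 2" unfolding e_def using q by (simp add: field_simps)
  ultimately show ?thesis using assms by (intro exI[of _ e]) auto
qed

lemma int_coords:
  fixes A B C D V :: point
  assumes tet: "\<not> affine_dependent {A, B, C, D}" "card {A, B, C, D} = 4"
    and V: "V \<in> interior (convex hull {A, B, C, D})"
  obtains lA lB lC lD where "0 < lA" "0 < lB" "0 < lC" "0 < lD" "lA + lB + lC + lD = 1"
    "V = lA *\<^sub>R A + lB *\<^sub>R B + lC *\<^sub>R C + lD *\<^sub>R D"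
proof -
  note d = dist4[OF tet(2)]
  have "interior (convex hull {A, B, C, D}) =
     {y. \<exists>u. (\<forall>x\<in>{A,B,C,D}. 0 < u x \<and> u x < 1) \<and> sum u {A,B,C,D} = 1 \<and> (\<Sum>x\<in>{A,B,C,D}. u x *\<^sub>R x) = y}"
    using interior_convex_hull_explicit[OF tet(1)] tet(2) by simp
  then obtain l where l: "\<forall>x\<in>{A,B,C,D}. 0 < l x \<and> l x < 1" "sum l {A,B,C,D} = 1"
    "(\<Sum>x\<in>{A,B,C,D}. l x *\<^sub>R x) = V" using V by auto
  have l1: "l A + l B + l C + l D = 1" using l(2) d by simp
  have l2: "V = l A *\<^sub>R A + l B *\<^sub>R B + l C *\<^sub>R C + l D *\<^sub>R D" using l(3) d by (simp add: algebra_simps)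
  show ?thesis using that[OF _ _ _ _ l1 l2] l(1) by auto
qed

lemma int_pt:
  fixes A B C D :: point
  assumes tet: "\<not> affine_dependent {A, B, C, D}" "card {A, B, C, D} = 4"
    and e: "0 < e" "e < 1/3"
  shows "e *\<^sub>R A + e *\<^sub>R B + e *\<^sub>R C + (1 - 3 * e) *\<^sub>R D \<in> interior (convex hull {A, B, C, D})"
proof -
  note d = dist4[OF tet(2)]
  have I: "interior (convex hull {A, B, C, D}) =
     {y. \<exists>u. (\<forall>x\<in>{A,B,C,D}. 0 < u x \<and> u x < 1) \<and> sum u {A,B,C,D} = 1 \<and> (\<Sum>x\<in>{A,B,C,D}. u x *\<^sub>R x) = y}"
    using interior_convex_hull_explicit[OF tet(1)] tet(2) by simp
  show ?thesis unfolding I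
    apply (rule CollectI, rule exI[of _ "\<lambda>x. if x = D then 1 - 3 * e else e"])
    using d e by (simp add: algebra_simps)
qed

lemma gvals:
  fixes A B C D V :: point
  assumes "lA + lB + lC + lD = 1" "V = lA *\<^sub>R A + lB *\<^sub>R B + lC *\<^sub>R C + lD *\<^sub>R D"
  shows "orth_part (B - A) (C - A) \<bullet> orth_part (B - A) (V - A) =
          lC * (orth_part (B - A) (C - A) \<bullet> orth_part (B - A) (C - A))
          + lD * (orth_part (B - A) (C - A) \<bullet> orth_part (B - A) (D - A))"
    "orth_part (C - A) (B - A) \<bullet> orth_part (C - A) (V - A) =
          lB * (orth_part (C - A) (B - A) \<bullet> orth_part (C - A) (B - A))
          + lD * (orth_part (C - A) (B - A) \<bullet> orth_part (C - A) (D - A))"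
    "orth_part (C - B) (A - B) \<bullet> orth_part (C - B) (V - B) =
          lA * (orth_part (C - B) (A - B) \<bullet> orth_part (C - B) (A - B))
          + lD * (orth_part (C - B) (A - B) \<bullet> orth_part (C - B) (D - B))"
proof -
  have z: "orth_part d 0 = 0" for d :: point by (simp add: orth_part_def)
  show "orth_part (B - A) (C - A) \<bullet> orth_part (B - A) (V - A) =
          lC * (orth_part (B - A) (C - A) \<bullet> orth_part (B - A) (C - A))
          + lD * (orth_part (B - A) (C - A) \<bullet> orth_part (B - A) (D - A))"
    unfolding affine4[OF assms] by (simp add: orth_self z)
  show "orth_part (C - A) (B - A) \<bullet> orth_part (C - A) (V - A) =
          lB * (orth_part (C - A) (B - A) \<bullet> orth_part (C - A) (B - A))
          + lD * (orth_part (C - A) (B - A) \<bullet> orth_part (C - A) (D - A))"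
    unfolding affine4[OF assms] by (simp add: orth_self z)
  show "orth_part (C - B) (A - B) \<bullet> orth_part (C - B) (V - B) =
          lA * (orth_part (C - B) (A - B) \<bullet> orth_part (C - B) (A - B))
          + lD * (orth_part (C - B) (A - B) \<bullet> orth_part (C - B) (D - B))"
    unfolding affine4[OF assms] by (simp add: orth_self z)
qed



theorem lemma1p5:
  fixes A B C D Z :: point
  assumes tet: "\<not> affine_dependent {A, B, C, D}" "card {A, B, C, D} = 4"
    and Z: "Z \<in> interior (convex hull {A, B, C, D})"
  shows
    "(equilibrium_on (convex hull {A, B, C, D}) Z (convex hull {A, B, C}) \<longleftrightarrow>
        dihedral_angle A B C Z < pi / 2 \<and> dihedral_angle A C B Z < pi / 2 \<and>
        dihedral_angle B C A Z < pi / 2)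
   \<and> ((\<forall>Z' \<in> interior (convex hull {A, B, C, D}).
          equilibrium_on (convex hull {A, B, C, D}) Z' (convex hull {A, B, C})) \<longleftrightarrow>
        dihedral_angle A B C D \<le> pi / 2 \<and> dihedral_angle A C B D \<le> pi / 2 \<and>
        dihedral_angle B C A D \<le> pi / 2)
   \<and> (dihedral_angle A B C Z > pi / 2 \<longrightarrow>
        (\<forall>r P Q \<Omega>. 0 < r \<and> r < dist A B \<and> r < dist A C \<and> r < dist A Z \<and>
            P \<in> closed_segment A B \<and> dist A P = r \<and>
            Q \<in> closed_segment A C \<and> dist A Q = r \<and>
            \<Omega> \<in> closed_segment A Z \<and> dist A \<Omega> = r \<longrightarrow>
            spherical_angle A P Q \<Omega> > pi / 2)
      \<and> (\<forall>r P Q \<Omega>. 0 < r \<and> r < dist B A \<and> r < dist B C \<and> r < dist B Z \<and>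
            P \<in> closed_segment B A \<and> dist B P = r \<and>
            Q \<in> closed_segment B C \<and> dist B Q = r \<and>
            \<Omega> \<in> closed_segment B Z \<and> dist B \<Omega> = r \<longrightarrow>
            spherical_angle B P Q \<Omega> > pi / 2))"
proof -
  note d = dist4[OF tet(2)]
  define p1 where "p1 = orth_part (B - A) (C - A)"
  define p2 where "p2 = orth_part (C - A) (B - A)"
  define p3 where "p3 = orth_part (C - B) (A - B)"
  define g1 where "g1 = p1 \<bullet> orth_part (B - A) (D - A)"
  define g2 where "g2 = p2 \<bullet> orth_part (C - A) (D - A)"
  define g3 where "g3 = p3 \<bullet> orth_part (C - B) (D - B)"
  have n1: "0 < p1 \<bullet> p1" unfolding p1_def
    using orth_nonzero[OF tet(1), of A B C] d by simp
  have n2: "0 < p2 \<bullet> p2" unfolding p2_def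
    using orth_nonzero[OF tet(1), of A C B] d by simp
  have n3: "0 < p3 \<bullet> p3" unfolding p3_def
    using orth_nonzero[OF tet(1), of B C A] d by simp
  have P1: "equilibrium_on (convex hull {A, B, C, D}) V (convex hull {A, B, C}) \<longleftrightarrow>
        0 < p1 \<bullet> orth_part (B - A) (V - A) \<and> 0 < p2 \<bullet> orth_part (C - A) (V - A) \<and>
        0 < p3 \<bullet> orth_part (C - B) (V - B)"
    if "V \<in> interior (convex hull {A, B, C, D})" for V
    unfolding part1[OF tet that] p1_def p2_def p3_def ..
  have GV: "p1 \<bullet> orth_part (B - A) (V - A) = lC * (p1 \<bullet> p1) + lD * g1"
     "p2 \<bullet> orth_part (C - A) (V - A) = lB * (p2 \<bullet> p2) + lD * g2"
     "p3 \<bullet> orth_part (C - B) (V - B) = lA * (p3 \<bullet> p3) + lD * g3"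
    if "lA + lB + lC + lD = 1" "V = lA *\<^sub>R A + lB *\<^sub>R B + lC *\<^sub>R C + lD *\<^sub>R D" for lA lB lC lD V
    using gvals[OF that] unfolding p1_def p2_def p3_def g1_def g2_def g3_def by simp_all
  have P2: "(\<forall>Z' \<in> interior (convex hull {A, B, C, D}).
          equilibrium_on (convex hull {A, B, C, D}) Z' (convex hull {A, B, C})) \<longleftrightarrow>
        0 \<le> g1 \<and> 0 \<le> g2 \<and> 0 \<le> g3"
  proof
    assume all: "\<forall>Z' \<in> interior (convex hull {A, B, C, D}).
          equilibrium_on (convex hull {A, B, C, D}) Z' (convex hull {A, B, C})"
    have E: "0 < e * (p1 \<bullet> p1) + (1 - 3 * e) * g1 \<and> 0 < e * (p2 \<bullet> p2) + (1 - 3 * e) * g2 \<and>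
        0 < e * (p3 \<bullet> p3) + (1 - 3 * e) * g3" if "0 < e" "e < 1/3" for e
    proof -
      define V where "V = e *\<^sub>R A + e *\<^sub>R B + e *\<^sub>R C + (1 - 3 * e) *\<^sub>R D"
      have Vi: "V \<in> interior (convex hull {A, B, C, D})"
        unfolding V_def by (rule int_pt[OF tet that])
      have s: "e + e + e + (1 - 3 * e) = 1" by simp
      note gv = GV[OF s V_def]
      have "equilibrium_on (convex hull {A, B, C, D}) V (convex hull {A, B, C})" using all Vi by blast
      then have c: "0 < p1 \<bullet> orth_part (B - A) (V - A) \<and> 0 < p2 \<bullet> orth_part (C - A) (V - A) \<and>
        0 < p3 \<bullet> orth_part (C - B) (V - B)" using P1[OF Vi] by blast
      show ?thesis using c unfolding gv .
    qed
    show "0 \<le> g1 \<and> 0 \<le> g2 \<and> 0 \<le> g3"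
    proof (intro conjI)
      show "0 \<le> g1"
      proof (rule ccontr)
        assume "\<not> 0 \<le> g1"
        then have "g1 < 0" by simp
        then obtain e where e: "0 < e" "e < 1/3" "e * (p1 \<bullet> p1) + (1 - 3 * e) * g1 < 0"
          using eps_lemma[OF n1] by blast
        show False using E[OF e(1) e(2)] e(3) by linarith
      qed
      show "0 \<le> g2"
      proof (rule ccontr)
        assume "\<not> 0 \<le> g2"
        then have "g2 < 0" by simp
        then obtain e where e: "0 < e" "e < 1/3" "e * (p2 \<bullet> p2) + (1 - 3 * e) * g2 < 0"
          using eps_lemma[OF n2] by blast
        show False using E[OF e(1) e(2)] e(3) by linarith
      qed
      show "0 \<le> g3"
      proof (rule ccontr)
        assume "\<not> 0 \<le> g3"
        then have "g3 < 0" by simp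
        then obtain e where e: "0 < e" "e < 1/3" "e * (p3 \<bullet> p3) + (1 - 3 * e) * g3 < 0"
          using eps_lemma[OF n3] by blast
        show False using E[OF e(1) e(2)] e(3) by linarith
      qed
    qed
  next
    assume g: "0 \<le> g1 \<and> 0 \<le> g2 \<and> 0 \<le> g3"
    show "\<forall>Z' \<in> interior (convex hull {A, B, C, D}).
          equilibrium_on (convex hull {A, B, C, D}) Z' (convex hull {A, B, C})"
    proof
      fix V assume Vi: "V \<in> interior (convex hull {A, B, C, D})"
      obtain lA lB lC lD where l: "0 < lA" "0 < lB" "0 < lC" "0 < lD" "lA + lB + lC + lD = 1"
        "V = lA *\<^sub>R A + lB *\<^sub>R B + lC *\<^sub>R C + lD *\<^sub>R D" using int_coords[OF tet Vi] by blast
      note gv = GV[OF l(5,6)]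
      have "0 < lC * (p1 \<bullet> p1) + lD * g1" using l n1 g by (intro add_pos_nonneg) auto
      moreover have "0 < lB * (p2 \<bullet> p2) + lD * g2" using l n2 g by (intro add_pos_nonneg) auto
      moreover have "0 < lA * (p3 \<bullet> p3) + lD * g3" using l n3 g by (intro add_pos_nonneg) auto
      ultimately show "equilibrium_on (convex hull {A, B, C, D}) V (convex hull {A, B, C})"
        unfolding P1[OF Vi] gv by simp
    qed
  qed
  have D2: "dihedral_angle A B C D \<le> pi / 2 \<longleftrightarrow> 0 \<le> g1"
      "dihedral_angle A C B D \<le> pi / 2 \<longleftrightarrow> 0 \<le> g2"
      "dihedral_angle B C A D \<le> pi / 2 \<longleftrightarrow> 0 \<le> g3"
    unfolding dihedral_angle_def vangle_le g1_def g2_def g3_def p1_def p2_def p3_def by simp_all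
  have EQ: "equilibrium_on (convex hull {A, B, C, D}) Z (convex hull {A, B, C}) \<longleftrightarrow>
        dihedral_angle A B C Z < pi / 2 \<and> dihedral_angle A C B Z < pi / 2 \<and>
        dihedral_angle B C A Z < pi / 2"
    unfolding part1[OF tet Z] dihedral_angle_def vangle_lt ..
  have P2': "(\<forall>Z' \<in> interior (convex hull {A, B, C, D}).
          equilibrium_on (convex hull {A, B, C, D}) Z' (convex hull {A, B, C})) \<longleftrightarrow>
        dihedral_angle A B C D \<le> pi / 2 \<and> dihedral_angle A C B D \<le> pi / 2 \<and>
        dihedral_angle B C A D \<le> pi / 2"
    unfolding P2 D2 ..
  show ?thesis
    apply (intro conjI)
      apply (rule EQ)
     apply (rule P2')
    apply (rule impI)
    apply (erule part3)
    done
qed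


end
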